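(* Let $W,V$ be subspaces of $\mathbb{R}^n$ with $\mathbb{R}^n=W\oplus V^\perp$, and let $\mu$ and $\nu$ be probabilistic frames for $W$ and $V$, respectively. (1) If $\nu$ is an oblique $\epsilon$-approximately dual probabilistic frame of $\mu$ on $V$, then $\mu$ and $\nu$ perform probabilistic $\sqrt B\,\epsilon$-consistent reconstruction, where $B>0$ is an upper frame bound for $\nu$. (2) Conversely, if $\mu$ and $\nu$ perform probabilistic $\alpha$-consistent reconstruction, then $\nu$ is an oblique $\epsilon$-approximately dual probabilistic frame of $\mu$ on $V$, where $\epsilon=\alpha\sqrt{M_2\big((\boldsymbol{\pi}_{WV^\perp}\mathbf{S}_\nu^\dagger)_\#\nu\big)}$.
   Context: $\mathcal{P}_2(S)$ denotes Borel probability measures on $\mathbb{R}^n$ concentrated on the subspace $S$ with finite second moment $M_2(\eta)=\int\|\mathbf{x}\|^2d\eta(\mathbf{x})$. $\mu\in\mathcal{P}_2(W)$ is a probabilistic frame for $W$ with bounds $0<A\le B$ if $A\|\mathbf{x}\|^2\le\int_W|\langle\mathbf{x},\mathbf{y}\rangle|^2d\mu(\mathbf{y})\le B\|\mathbf{x}\|^2$ for all $\mathbf{x}\in W$. The frame operator of $\nu$ is $\mathbf{S}_\nu=\int\mathbf{y}\mathbf{y}^td\nu(\mathbf{y})$ with Moore–Penrose inverse $\mathbf{S}_\nu^\dagger$. $\Gamma(\mu,\nu)$ is the set of Borel probability measures on $W\times V$ with marginals $\mu,\nu$. $\boldsymbol{\pi}_{WV^\perp}$ is the oblique projection onto $W$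 along $V^\perp$. For $\epsilon\ge0$, $\nu$ is an oblique $\epsilon$-approximately dual probabilistic frame of $\mu$ on $V$ if there is $\gamma\in\Gamma(\mu,\nu)$ with $\left\|\int_{W\times V}\mathbf{x}\mathbf{y}^td\gamma(\mathbf{x},\mathbf{y})-\boldsymbol{\pi}_{WV^\perp}\right\|\le\epsilon$ (operator norm induced by the Euclidean norm). For $\epsilon\ge0$, $\mu$ and $\nu$ perform probabilistic $\epsilon$-consistent reconstruction if there is $\gamma\in\Gamma(\mu,\nu)$ such that for every $\mathbf{f}\in\mathbb{R}^n$, $\left(\int_V|\langle\mathbf{f}-\hat{\mathbf{f}},\mathbf{z}\rangle|^2d\nu(\mathbf{z})\right)^{1/2}\le\epsilon\|\mathbf{f}\|$, where $\hat{\mathbf{f}}=\int_{W\times V}\mathbf{x}\langle\mathbf{y},\mathbf{f}\rangle\,d\gamma(\mathbf{x},\mathbf{y})$. *)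

theory Defs
  imports "HOL-Probability.Probability"
begin

definition outer :: "real^'n \<Rightarrow> real^'n \<Rightarrow> real^'n^'n" where
  "outer x y = (\<chi> i j. x $ i * y $ j)"

definition P2 :: "(real^'n) set \<Rightarrow> (real^'n) measure set" where
  "P2 S = {\<eta>. prob_space \<eta> \<and> sets \<eta> = sets borel \<and> (AE x in \<eta>. x \<in> S)
              \<and> integrable \<eta> (\<lambda>x. (norm x)^2)}"

definition M2 :: "(real^'n) measure \<Rightarrow> real" where
  "M2 \<eta> = (\<integral>x. (norm x)^2 \<partial>\<eta>)"

definition prob_frame :: "(real^'n) measure \<Rightarrow> (real^'n) set \<Rightarrow> real \<Rightarrow> real \<Rightarrow> bool" where
  "prob_frame \<mu> W A B \<longleftrightarrow> \<mu> \<in> P2 W \<and> 0 < A \<and> A \<le> B \<and>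
     (\<forall>x\<in>W. A * (norm x)^2 \<le> (\<integral>y. \<bar>x \<bullet> y\<bar>^2 \<partial>\<mu>) \<and> (\<integral>y. \<bar>x \<bullet> y\<bar>^2 \<partial>\<mu>) \<le> B * (norm x)^2)"

definition frame_op :: "(real^'n) measure \<Rightarrow> real^'n^'n" where
  "frame_op \<nu> = (\<integral>y. outer y y \<partial>\<nu>)"

definition mp_inverse :: "real^'n^'n \<Rightarrow> real^'n^'n" where
  "mp_inverse A = (THE X. A ** X ** A = A \<and> X ** A ** X = X \<and>
       transpose (A ** X) = A ** X \<and> transpose (X ** A) = X ** A)"

definition couplings :: "(real^'n) measure \<Rightarrow> (real^'n) measure \<Rightarrow> ((real^'n) \<times> (real^'n)) measure set" where
  "couplings \<mu> \<nu> = {\<gamma>. prob_space \<gamma> \<and> sets \<gamma> = sets (borel \<Otimes>\<^sub>M borel) \<and>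
       distr \<gamma> borel fst = \<mu> \<and> distr \<gamma> borel snd = \<nu>}"

text \<open>Oblique projection onto W along U (meaningful when R^n = W \<oplus> U).\<close>
definition oblique_proj :: "(real^'n) set \<Rightarrow> (real^'n) set \<Rightarrow> real^'n \<Rightarrow> real^'n" where
  "oblique_proj W U x = (THE w. w \<in> W \<and> x - w \<in> U)"

definition cross_op :: "((real^'n) \<times> (real^'n)) measure \<Rightarrow> real^'n^'n" where
  "cross_op \<gamma> = (\<integral>p. outer (fst p) (snd p) \<partial>\<gamma>)"

definition oblique_approx_dual ::
  "real \<Rightarrow> (real^'n) measure \<Rightarrow> (real^'n) measure \<Rightarrow> (real^'n) set \<Rightarrow> (real^'n) set \<Rightarrow> bool" where
  "oblique_approx_dual \<epsilon> \<nu> \<mu> W V \<longleftrightarrow> 0 \<le> \<epsilon> \<and>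
     (\<exists>\<gamma>\<in>couplings \<mu> \<nu>.
        onorm (\<lambda>v. (cross_op \<gamma> - matrix (oblique_proj W (orthogonal_comp V))) *v v) \<le> \<epsilon>)"

definition reconstr :: "((real^'n) \<times> (real^'n)) measure \<Rightarrow> real^'n \<Rightarrow> real^'n" where
  "reconstr \<gamma> f = (\<integral>p. ((snd p) \<bullet> f) *\<^sub>R fst p \<partial>\<gamma>)"

definition consistent_reconstruction ::
  "real \<Rightarrow> (real^'n) measure \<Rightarrow> (real^'n) measure \<Rightarrow> bool" where
  "consistent_reconstruction \<epsilon> \<mu> \<nu> \<longleftrightarrow> 0 \<le> \<epsilon> \<and>
     (\<exists>\<gamma>\<in>couplings \<mu> \<nu>. \<forall>f.
        sqrt (\<integral>z. \<bar>(f - reconstr \<gamma> f) \<bullet> z\<bar>^2 \<partial>\<nu>) \<le> \<epsilon> * norm f)"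

end

theory Submission
  imports Defs
begin

definition penrose :: "real^'n^'n \<Rightarrow> real^'n^'n \<Rightarrow> bool" where
  "penrose A X \<longleftrightarrow> A ** X ** A = A \<and> X ** A ** X = X \<and>
       transpose (A ** X) = A ** X \<and> transpose (X ** A) = X ** A"

lemma penrose_unique:
  assumes "penrose A X" "penrose A Y" shows "X = Y"
proof -
  have a1: "A ** X ** A = A" and a2: "X ** A ** X = X" and a3: "transpose (A ** X) = A ** X"
    and a4: "transpose (X ** A) = X ** A" using assms(1) unfolding penrose_def by auto
  have b1: "A ** Y ** A = A" and b2: "Y ** A ** Y = Y" and b3: "transpose (A ** Y) = A ** Y"
    and b4: "transpose (Y ** A) = Y ** A" using assms(2) unfolding penrose_def by auto
  have "X = X ** (A ** X)" using a2 by (simp add: matrix_mul_assoc)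
  also have "\<dots> = X ** (transpose X ** transpose A)" using a3 by (metis matrix_transpose_mul)
  also have "\<dots> = X ** (transpose X ** (transpose A ** transpose Y ** transpose A))"
    using b1 by (metis matrix_transpose_mul matrix_mul_assoc)
  also have "\<dots> = X ** (transpose (A ** X) ** transpose (A ** Y))"
    by (simp add: matrix_transpose_mul matrix_mul_assoc)
  also have "\<dots> = X ** A ** X ** A ** Y" using a3 b3 by (simp add: matrix_mul_assoc)
  also have "\<dots> = X ** A ** Y" using a2 by simp
  finally have x: "X = X ** A ** Y" .
  have "Y = (Y ** A) ** Y" using b2 by simp
  also have "\<dots> = transpose A ** transpose Y ** Y" using b4 by (metis matrix_transpose_mul)
  also have "\<dots> = transpose A ** transpose X ** transpose A ** transpose Y ** Y"
    using a1 by (metis matrix_transpose_mul matrix_mul_assoc)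
  also have "\<dots> = transpose (X ** A) ** transpose (Y ** A) ** Y"
    by (simp add: matrix_transpose_mul matrix_mul_assoc)
  also have "\<dots> = X ** A ** Y ** A ** Y" using a4 b4 by (simp add: matrix_mul_assoc)
  also have "\<dots> = X ** A ** Y" by (metis b2 matrix_mul_assoc)
  finally show ?thesis using x by simp
qed

lemma outer_mult: "outer x y *v v = (y \<bullet> v) *\<^sub>R x"
  by (simp add: vec_eq_iff outer_def matrix_vector_mult_def inner_vec_def sum_distrib_left mult_ac)

lemma transpose_outer: "transpose (outer x y) = outer y x"
  by (simp add: vec_eq_iff outer_def transpose_def)


lemma inner_mv: "(A *v x) \<bullet> y = x \<bullet> (transpose A *v (y::real^'n))"
  by (metis dot_lmul_matrix inner_commute transpose_matrix_vector)

lemma sum_mv: "finite B \<Longrightarrow> (sum f B) *v x = sum (\<lambda>b. f b *v x) B"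
  by (induction B rule: finite_induct) (auto simp: matrix_vector_mult_add_rdistrib)

lemma penrose_exists:
  fixes S :: "real^'n^'n"
  assumes symS: "transpose S = S"
  shows "\<exists>X. penrose S X"
proof -
  define K where "K = {x. S *v x = 0}"
  have "subspace K" unfolding K_def subspace_def by (auto simp: matrix_vector_right_distrib matrix_vector_mult_scaleR)
  then obtain B where BK: "B \<subseteq> K" and orth: "pairwise orthogonal B"
    and n1: "\<And>x. x \<in> B \<Longrightarrow> norm x = 1" and ind: "independent B" and spB: "span B = K"
    by (rule orthonormal_basis_subspace) blast
  have finB: "finite B" using ind by (rule independent_imp_finite)
  define Q where "Q = (\<Sum>b\<in>B. outer b b)"
  have Qv: "Q *v x = (\<Sum>b\<in>B. (b \<bullet> x) *\<^sub>R b)" for x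
    unfolding Q_def by (simp add: sum_mv[OF finB] outer_mult)
  have QK: "Q *v x \<in> K" for x
    unfolding Qv spB[symmetric] by (intro span_sum span_scale span_base)
  have q1: "S *v (Q *v x) = 0" for x using QK unfolding K_def by auto
  have q2: "Q *v (S *v x) = 0" for x
  proof -
    have "b \<bullet> (S *v x) = 0" if "b \<in> B" for b
    proof -
      have "b \<bullet> (S *v x) = (S *v x) \<bullet> b" by (simp add: inner_commute)
      also have "\<dots> = x \<bullet> (S *v b)" by (simp add: inner_mv symS)
      also have "\<dots> = 0" using that BK unfolding K_def by auto
      finally show ?thesis .
    qed
    then show ?thesis unfolding Qv by simp
  qed
  have bQ: "b \<bullet> (Q *v x) = b \<bullet> x" if "b \<in> B" for b x
  proof -
    have "b \<bullet> (Q *v x) = (\<Sum>c\<in>B. (c \<bullet> x) * (b \<bullet> c))" unfolding Qv by (simp add: inner_sum_right)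
    also have "\<dots> = (\<Sum>c\<in>B. if c = b then b \<bullet> x else 0)"
    proof (rule sum.cong)
      fix c assume "c \<in> B"
      show "(c \<bullet> x) * (b \<bullet> c) = (if c = b then b \<bullet> x else 0)"
      proof (cases "c = b")
        case True then show ?thesis using n1[OF that] by (simp add: norm_eq_1)
      next
        case False then show ?thesis using orth \<open>c \<in> B\<close> that by (auto simp: pairwise_def orthogonal_def inner_commute)
      qed
    qed simp
    also have "\<dots> = b \<bullet> x" using that finB by (simp add: sum.delta')
    finally show ?thesis .
  qed
  have q3: "Q *v (Q *v x) = Q *v x" for x
    by (simp add: Qv[of "Q *v x"] bQ) (simp add: Qv)
  have q4: "Q *v x = x" if "x \<in> K" for x
  proof -
    have "orthogonal (x - Q *v x) b" if "b \<in> B" for b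
      using bQ[OF that, of x] by (simp add: orthogonal_def inner_diff_left inner_diff_right inner_commute)
    moreover have "x - Q *v x \<in> span B" using that QK spB by (metis span_diff span_superset subsetD)
    ultimately have "orthogonal (x - Q *v x) (x - Q *v x)" by (metis orthogonal_to_span)
    then show ?thesis by (simp add: orthogonal_def)
  qed
  have symQ: "transpose Q = Q"
    unfolding Q_def by (simp add: vec_eq_iff transpose_def outer_def sum_component mult.commute)
  define T where "T = S + Q"
  have Tv: "T *v x = S *v x + Q *v x" for x unfolding T_def by (simp add: matrix_vector_mult_add_rdistrib)
  have "\<forall>x. T *v x = 0 \<longrightarrow> x = 0"
  proof (intro allI impI)
    fix x assume "T *v x = 0"
    then have e: "S *v x = - (Q *v x)" unfolding Tv by (simp add: eq_neg_iff_add_eq_0)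
    have "(S *v x) \<bullet> (Q *v x) = x \<bullet> (S *v (Q *v x))" by (simp add: inner_mv symS)
    then have "(Q *v x) \<bullet> (Q *v x) = 0" using e q1 by simp
    then have "Q *v x = 0" by simp
    then have "S *v x = 0" using e by simp
    then have "x \<in> K" unfolding K_def by simp
    then show "x = 0" using q4 \<open>Q *v x = 0\<close> by metis
  qed
  then obtain T' where T'T: "T' ** T = mat 1" using matrix_left_invertible_ker by blast
  then have TT': "T ** T' = mat 1" using matrix_left_right_inverse by blast
  have i1: "T' *v (T *v y) = y" for y using T'T by (simp add: matrix_vector_mul_assoc)
  have i2: "T *v (T' *v y) = y" for y using TT' by (simp add: matrix_vector_mul_assoc)
  have QT': "Q *v (T' *v x) = Q *v x" for x
  proof -
    have "S *v (T' *v x) + Q *v (T' *v x) = x" using i2[of x] by (simp add: Tv)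
    then have "Q *v x = Q *v (S *v (T' *v x)) + Q *v (Q *v (T' *v x))"
      by (metis matrix_vector_right_distrib)
    then show ?thesis using q2 q3 by simp
  qed
  have T'Q: "T' *v (Q *v x) = Q *v x" for x
  proof -
    have "T *v (Q *v x) = Q *v x" using q1 q3 by (simp add: Tv)
    then show ?thesis using i1 by metis
  qed
  define X where "X = T' - Q"
  have Xv: "X *v x = T' *v x - Q *v x" for x unfolding X_def by (simp add: matrix_vector_mult_diff_rdistrib)
  have SX: "S ** X = mat 1 - Q"
  proof (subst matrix_eq, intro allI)
    fix x
    have "S *v (T' *v x) + Q *v x = x" using i2[of x] QT' by (simp add: Tv)
    then have "S *v (T' *v x) = x - Q *v x" by (metis add_diff_cancel_right')
    then show "(S ** X) *v x = (mat 1 - Q) *v x"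
      by (simp add: matrix_vector_mul_assoc[symmetric] Xv matrix_vector_mult_diff_distrib q1 matrix_vector_mult_diff_rdistrib)
  qed
  have XS: "X ** S = mat 1 - Q"
  proof (subst matrix_eq, intro allI)
    fix x
    have "S *v x = T *v x - Q *v x" by (simp add: Tv)
    then have "T' *v (S *v x) = x - Q *v x"
      using i1 T'Q by (simp add: matrix_vector_mult_diff_distrib)
    then show "(X ** S) *v x = (mat 1 - Q) *v x"
      by (simp add: matrix_vector_mul_assoc[symmetric] Xv q2 matrix_vector_mult_diff_rdistrib)
  qed
  have tr: "transpose (mat 1 - Q) = mat 1 - Q"
    using symQ by (simp add: vec_eq_iff transpose_def mat_def)
  have p1: "S ** X ** S = S"
    by (subst matrix_eq, simp add: SX matrix_vector_mul_assoc[symmetric] matrix_vector_mult_diff_rdistrib q2)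
  have p2: "X ** S ** X = X"
    by (subst matrix_eq, simp add: XS matrix_vector_mul_assoc[symmetric] matrix_vector_mult_diff_rdistrib Xv
          matrix_vector_mult_diff_distrib QT' q3)
  show ?thesis unfolding penrose_def
    by (rule exI[of _ X]) (metis p1 p2 SX XS tr)
qed


lemma mp_inverse_penrose:
  assumes "transpose S = S" shows "penrose S (mp_inverse S)"
proof -
  have "\<exists>!X. penrose S X" using penrose_exists[OF assms] penrose_unique by blast
  then have "penrose S (THE X. penrose S X)" by (rule theI')
  then show ?thesis unfolding mp_inverse_def penrose_def by simp
qed

lemma mp_left:
  fixes S :: "real^'n^'n"
  assumes symS: "transpose S = S"
    and ker: "\<And>k. S *v k = 0 \<Longrightarrow> k \<bullet> h = 0"
  shows "mp_inverse S *v (S *v h) = h"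
proof -
  define X where "X = mp_inverse S"
  have pen: "penrose S X" unfolding X_def by (rule mp_inverse_penrose[OF symS])
  define p where "p = X ** S"
  have pp: "p *v (p *v x) = p *v x" for x
    using pen unfolding penrose_def p_def by (simp add: matrix_vector_mul_assoc matrix_mul_assoc)
  have Sp: "S *v (p *v x) = S *v x" for x
    using pen unfolding penrose_def p_def by (simp add: matrix_vector_mul_assoc matrix_mul_assoc)
  have pT: "transpose p = p" using pen unfolding penrose_def p_def by simp
  define k where "k = h - p *v h"
  have "S *v k = 0" unfolding k_def by (simp add: matrix_vector_mult_diff_distrib Sp)
  then have hk: "k \<bullet> h = 0" by (rule ker)
  have pk: "p *v k = 0" unfolding k_def by (simp add: matrix_vector_mult_diff_distrib pp)
  have "k \<bullet> k = h \<bullet> k - (p *v h) \<bullet> k" unfolding k_def by (simp add: inner_diff_left)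
  also have "(p *v h) \<bullet> k = h \<bullet> (p *v k)" by (simp add: inner_mv pT)
  finally have "k \<bullet> k = 0" using hk pk by (simp add: inner_commute)
  then have "k = 0" by simp
  then show ?thesis unfolding k_def p_def X_def by (simp add: matrix_vector_mul_assoc)
qed

lemma outer_row: "outer x y $ i = x $ i *\<^sub>R y"
  by (simp add: vec_eq_iff outer_def)

lemma norm_outer: "norm (outer x y) = norm x * norm (y::real^'n)"
proof -
  have "norm (outer x y) = sqrt (\<Sum>i\<in>UNIV. (norm (outer x y $ i))^2)"
    by (simp add: norm_vec_def L2_set_def)
  also have "\<dots> = sqrt (\<Sum>i\<in>UNIV. (x $ i)^2 * (norm y)^2)"
    by (simp add: outer_row power_mult_distrib)
  also have "\<dots> = sqrt ((\<Sum>i\<in>UNIV. (x $ i)^2) * (norm y)^2)"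
    by (simp add: sum_distrib_right)
  also have "\<dots> = norm x * norm y"
  proof -
    have "0 \<le> sqrt (\<Sum>i\<in>UNIV. (y $ i)^2)" by (simp add: sum_nonneg)
    then show ?thesis by (simp add: real_sqrt_mult norm_vec_def L2_set_def)
  qed
  finally show ?thesis .
qed

lemma continuous_outer: "continuous_on UNIV (\<lambda>p::(real^'n) \<times> (real^'n). outer (fst p) (snd p))"
  unfolding outer_def by (intro continuous_intros)

lemma quad_cs:
  fixes A B C :: real
  assumes q: "\<And>t. 0 \<le> t^2*A - 2*t*C + B" and A: "0 \<le> A" and B: "0 \<le> B"
  shows "C \<le> sqrt A * sqrt B"
proof (cases "C \<le> 0")
  case True
  have "0 \<le> sqrt A * sqrt B" using A B by simp
  then show ?thesis using True by linarith
next
  case False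
  have "C^2 \<le> A * B"
  proof (cases "A = 0")
    case True
    have "0 \<le> ((B+1)/(2*C))^2*A - 2*((B+1)/(2*C))*C + B" by (rule q)
    then show ?thesis using True False by (simp add: field_simps)
  next
    case nA: False
    then have Ap: "A > 0" using A by simp
    have "0 \<le> (C/A)^2*A - 2*(C/A)*C + B" by (rule q)
    then have "0 \<le> B - C^2/A" using Ap by (simp add: field_simps power2_eq_square)
    then show ?thesis using Ap by (simp add: field_simps)
  qed
  then have "C \<le> sqrt (A*B)" by (rule real_le_rsqrt)
  then show ?thesis by (simp add: real_sqrt_mult)
qed

lemma int_cs:
  fixes a b :: "'a \<Rightarrow> real"
  assumes ia: "integrable M (\<lambda>x. (a x)^2)" and ib: "integrable M (\<lambda>x. (b x)^2)"
    and iab: "integrable M (\<lambda>x. a x * b x)"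
  shows "(\<integral>x. a x * b x \<partial>M) \<le> sqrt (\<integral>x. (a x)^2 \<partial>M) * sqrt (\<integral>x. (b x)^2 \<partial>M)"
proof (rule quad_cs)
  fix t :: real
  have "0 \<le> (\<integral>x. (t * a x - b x)^2 \<partial>M)" by simp
  also have "(\<integral>x. (t * a x - b x)^2 \<partial>M) = (\<integral>x. t^2 * (a x)^2 - 2*t*(a x * b x) + (b x)^2 \<partial>M)"
    by (rule Bochner_Integration.integral_cong) (auto simp: power2_eq_square algebra_simps)
  also have "\<dots> = t^2 * (\<integral>x. (a x)^2 \<partial>M) - 2*t*(\<integral>x. a x * b x \<partial>M) + (\<integral>x. (b x)^2 \<partial>M)"
    using ia ib iab by simp
  finally show "0 \<le> t^2 * (\<integral>x. (a x)^2 \<partial>M) - 2*t*(\<integral>x. a x * b x \<partial>M) + (\<integral>x. (b x)^2 \<partial>M)" .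
qed simp_all


lemma meas_cont:
  assumes "sets M = sets borel" "continuous_on UNIV f"
  shows "f \<in> borel_measurable M"
proof -
  show ?thesis
    by (subst measurable_cong_sets[OF assms(1) refl]) (rule borel_measurable_continuous_onI[OF assms(2)])
qed

lemma couplingD:
  assumes "\<gamma> \<in> couplings \<mu> \<nu>"
  shows "prob_space \<gamma>" "sets \<gamma> = sets borel" "distr \<gamma> borel fst = \<mu>" "distr \<gamma> borel snd = \<nu>"
    "fst \<in> measurable \<gamma> borel" "snd \<in> measurable \<gamma> borel"
proof -
  have s: "sets \<gamma> = sets (borel \<Otimes>\<^sub>M borel)" using assms unfolding couplings_def by auto
  then show "sets \<gamma> = sets borel" by (metis borel_prod)
  show "prob_space \<gamma>" "distr \<gamma> borel fst = \<mu>" "distr \<gamma> borel snd = \<nu>"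
    using assms unfolding couplings_def by auto
  show "fst \<in> measurable \<gamma> borel" "snd \<in> measurable \<gamma> borel"
    using measurable_cong_sets[OF s refl] by auto
qed

lemma P2D:
  assumes "\<eta> \<in> P2 S"
  shows "prob_space \<eta>" "sets \<eta> = sets borel" "AE x in \<eta>. x \<in> S" "integrable \<eta> (\<lambda>x. (norm x)^2)"
  using assms unfolding P2_def by auto

lemma coupling_int_fst:
  assumes "\<gamma> \<in> couplings \<mu> \<nu>" "\<mu> \<in> P2 W"
  shows "integrable \<gamma> (\<lambda>p. (norm (fst p))^2)"
proof -
  have "integrable (distr \<gamma> borel fst) (\<lambda>x. (norm x)^2)" using couplingD(3)[OF assms(1)] P2D(4)[OF assms(2)] by simp
  then show ?thesis using integrable_distr_eq[OF couplingD(5)[OF assms(1)], of "\<lambda>x. (norm x)^2"] by simp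
qed

lemma coupling_int_snd:
  assumes "\<gamma> \<in> couplings \<mu> \<nu>" "\<nu> \<in> P2 V"
  shows "integrable \<gamma> (\<lambda>p. (norm (snd p))^2)"
proof -
  have "integrable (distr \<gamma> borel snd) (\<lambda>x. (norm x)^2)" using couplingD(4)[OF assms(1)] P2D(4)[OF assms(2)] by simp
  then show ?thesis using integrable_distr_eq[OF couplingD(6)[OF assms(1)], of "\<lambda>x. (norm x)^2"] by simp
qed

lemma coupling_AE_fst:
  assumes "\<gamma> \<in> couplings \<mu> \<nu>" "\<mu> \<in> P2 W" "closed W"
  shows "AE p in \<gamma>. fst p \<in> W"
proof -
  have "AE x in distr \<gamma> borel fst. x \<in> W" unfolding couplingD(3)[OF assms(1)] by (rule P2D(3)[OF assms(2)])
  moreover have "{x \<in> space borel. x \<in> W} \<in> sets borel" using assms(3) by simp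
  ultimately show ?thesis by (subst AE_distr_iff[OF couplingD(5)[OF assms(1)], symmetric])
qed


lemma bl_mv_left: "bounded_linear (\<lambda>A::real^'n^'n. A *v h)"
proof -
  have "linear (\<lambda>A::real^'n^'n. A *v h)"
    by (rule linearI) (simp_all add: matrix_vector_mult_add_rdistrib vec_eq_iff matrix_vector_mult_def
        sum_distrib_left mult.assoc distrib_right sum.distrib)
  then show ?thesis by (simp add: linear_conv_bounded_linear)
qed

lemma bl_transpose: "bounded_linear (transpose :: real^'n^'n \<Rightarrow> real^'n^'n)"
proof -
  have "linear (transpose :: real^'n^'n \<Rightarrow> real^'n^'n)"
    by (rule linearI) (simp_all add: vec_eq_iff transpose_def)
  then show ?thesis by (simp add: linear_conv_bounded_linear)
qed


lemma ab_le: "(a::real) * b \<le> a^2 + b^2" if "0 \<le> a" "0 \<le> b"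
proof -
  have "2*a*b \<le> a^2 + b^2" by (rule sum_squares_bound)
  moreover have "0 \<le> a*b" using that by simp
  ultimately show ?thesis by linarith
qed

lemma int_outer_self:
  assumes "\<eta> \<in> P2 S"
  shows "integrable \<eta> (\<lambda>y. outer y y)"
proof (rule Bochner_Integration.integrable_bound[OF P2D(4)[OF assms]])
  show "(\<lambda>y. outer y y) \<in> borel_measurable \<eta>"
    by (rule meas_cont[OF P2D(2)[OF assms]]) (unfold outer_def, intro continuous_intros)
  show "AE y in \<eta>. norm (outer y y) \<le> norm ((norm y)^2)"
    by (intro AE_I2) (simp add: norm_outer power2_eq_square)
qed


lemma int_outer_pair:
  assumes "\<gamma> \<in> couplings \<mu> \<nu>" "\<mu> \<in> P2 W" "\<nu> \<in> P2 V"
  shows "integrable \<gamma> (\<lambda>p. outer (fst p) (snd p))"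
proof (rule Bochner_Integration.integrable_bound[OF Bochner_Integration.integrable_add[OF coupling_int_fst[OF assms(1,2)] coupling_int_snd[OF assms(1,3)]]])
  show "(\<lambda>p. outer (fst p) (snd p)) \<in> borel_measurable \<gamma>"
    by (rule meas_cont[OF couplingD(2)[OF assms(1)] continuous_outer])
  show "AE p in \<gamma>. norm (outer (fst p) (snd p)) \<le> norm ((norm (fst p))^2 + (norm (snd p))^2)"
  proof (intro AE_I2)
    fix p :: "(real^'a) \<times> (real^'a)"
    have "norm (outer (fst p) (snd p)) \<le> (norm (fst p))^2 + (norm (snd p))^2"
      unfolding norm_outer by (rule ab_le) simp_all
    also have "\<dots> \<le> norm ((norm (fst p))^2 + (norm (snd p))^2)" unfolding real_norm_def by (rule abs_ge_self)
    finally show "norm (outer (fst p) (snd p)) \<le> norm ((norm (fst p))^2 + (norm (snd p))^2)" .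
  qed
qed

lemma frame_op_mv:
  assumes "\<eta> \<in> P2 S"
  shows "frame_op \<eta> *v h = (\<integral>y. (y \<bullet> h) *\<^sub>R y \<partial>\<eta>)"
proof -
  have "(\<integral>y. outer y y *v h \<partial>\<eta>) = frame_op \<eta> *v h"
    unfolding frame_op_def by (rule integral_bounded_linear[OF bl_mv_left int_outer_self[OF assms]])
  then show ?thesis by (simp add: outer_mult)
qed

lemma frame_op_sym:
  assumes "\<eta> \<in> P2 S"
  shows "transpose (frame_op \<eta>) = frame_op \<eta>"
proof -
  have "(\<integral>y. transpose (outer y y) \<partial>\<eta>) = transpose (frame_op \<eta>)"
    unfolding frame_op_def by (rule integral_bounded_linear[OF bl_transpose int_outer_self[OF assms]])
  then show ?thesis by (simp add: transpose_outer frame_op_def)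
qed

lemma cross_op_mv:
  assumes "\<gamma> \<in> couplings \<mu> \<nu>" "\<mu> \<in> P2 W" "\<nu> \<in> P2 V"
  shows "cross_op \<gamma> *v f = reconstr \<gamma> f"
proof -
  have "(\<integral>p. outer (fst p) (snd p) *v f \<partial>\<gamma>) = cross_op \<gamma> *v f"
    unfolding cross_op_def by (rule integral_bounded_linear[OF bl_mv_left int_outer_pair[OF assms]])
  then show ?thesis by (simp add: outer_mult reconstr_def)
qed


lemma obl_unique:
  assumes sW: "subspace W" and sU: "subspace U" and int: "W \<inter> U = {0}"
    and w: "w \<in> W" "x - w \<in> U"
  shows "oblique_proj W U x = w"
  unfolding oblique_proj_def
proof (rule the_equality)
  show "w \<in> W \<and> x - w \<in> U" using w by simp
  fix w' assume a: "w' \<in> W \<and> x - w' \<in> U"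
  have "w' - w \<in> W" using a w sW by (simp add: subspace_diff)
  moreover have "w' - w \<in> U" using subspace_diff[OF sU, of "x - w" "x - w'"] a w by simp
  ultimately have "w' - w \<in> W \<inter> U" by simp
  then show "w' = w" using int by simp
qed

lemma obl_props:
  assumes sW: "subspace W" and sU: "subspace U" and int: "W \<inter> U = {0}"
    and dec: "\<forall>x. \<exists>w\<in>W. \<exists>u\<in>U. x = w + u"
  shows "oblique_proj W U x \<in> W" "x - oblique_proj W U x \<in> U"
proof -
  obtain w u where "w \<in> W" "u \<in> U" "x = w + u" using dec by blast
  then have "x - w \<in> U" by simp
  then have "oblique_proj W U x = w" using obl_unique[OF sW sU int \<open>w \<in> W\<close>] by simp
  then show "oblique_proj W U x \<in> W" "x - oblique_proj W U x \<in> U" using \<open>w \<in> W\<close> \<open>x - w \<in> U\<close> by simp_all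
qed

lemma obl_linear:
  assumes sW: "subspace W" and sU: "subspace U" and int: "W \<inter> U = {0}"
    and dec: "\<forall>x. \<exists>w\<in>W. \<exists>u\<in>U. x = w + u"
  shows "linear (oblique_proj W U)"
proof (rule linearI)
  note p = obl_props[OF sW sU int dec]
  fix x y and c :: real
  show "oblique_proj W U (x + y) = oblique_proj W U x + oblique_proj W U y"
  proof (rule obl_unique[OF sW sU int])
    show "oblique_proj W U x + oblique_proj W U y \<in> W" using p sW by (simp add: subspace_add)
    have "x + y - (oblique_proj W U x + oblique_proj W U y) = (x - oblique_proj W U x) + (y - oblique_proj W U y)"
      by simp
    moreover have "(x - oblique_proj W U x) + (y - oblique_proj W U y) \<in> U" using p sU by (simp add: subspace_add)
    ultimately show "x + y - (oblique_proj W U x + oblique_proj W U y) \<in> U" by metis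
  qed
  show "oblique_proj W U (c *\<^sub>R x) = c *\<^sub>R oblique_proj W U x"
  proof (rule obl_unique[OF sW sU int])
    show "c *\<^sub>R oblique_proj W U x \<in> W" using p sW by (simp add: subspace_mul)
    have "c *\<^sub>R x - c *\<^sub>R oblique_proj W U x = c *\<^sub>R (x - oblique_proj W U x)"
      by (simp add: scaleR_diff_right)
    moreover have "c *\<^sub>R (x - oblique_proj W U x) \<in> U" using p sU by (simp add: subspace_mul)
    ultimately show "c *\<^sub>R x - c *\<^sub>R oblique_proj W U x \<in> U" by metis
  qed
qed

lemma decompV:
  fixes V :: "(real^'n) set"
  assumes "subspace V"
  obtains v u where "v \<in> V" "u \<in> orthogonal_comp V" "x = v + u"
proof -
  obtain y z where "y \<in> span V" "\<And>w. w \<in> span V \<Longrightarrow> orthogonal z w" "x = y + z"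
    using orthogonal_subspace_decomp_exists[of V x] by blast
  moreover have "span V = V" using assms by simp
  ultimately have "y \<in> V" "z \<in> orthogonal_comp V" "x = y + z"
    by (auto simp: orthogonal_comp_def orthogonal_commute)
  then show ?thesis using that by blast
qed

lemma int_by_sq:
  fixes F :: "real^'n \<Rightarrow> real"
  assumes s: "sets M = sets borel" and i: "integrable M (\<lambda>y. (norm y)^2)"
    and c: "continuous_on UNIV F" and b: "\<And>y. \<bar>F y\<bar> \<le> K * (norm y)^2"
  shows "integrable M F"
proof (rule Bochner_Integration.integrable_bound[OF integrable_mult_right[OF i, of K]])
  show "F \<in> borel_measurable M" by (rule meas_cont[OF s c])
  show "AE y in M. norm (F y) \<le> norm (K * (norm y)^2)"
  proof (intro AE_I2)
    fix y
    have "norm (F y) \<le> K * (norm y)^2" using b by simp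
    also have "\<dots> \<le> norm (K * (norm y)^2)" by simp
    finally show "norm (F y) \<le> norm (K * (norm y)^2)" .
  qed
qed

lemma AE_orth:
  assumes "AE z in \<nu>. z \<in> V"
  shows "AE z in \<nu>. \<forall>u\<in>orthogonal_comp V. u \<bullet> z = 0"
  using assms by eventually_elim (auto simp: orthogonal_comp_def orthogonal_def inner_commute)

lemma frame_upper_all:
  fixes \<nu> :: "(real^'n) measure"
  assumes pf: "prob_frame \<nu> V A B" and sV: "subspace V"
  shows "(\<integral>z. \<bar>x \<bullet> z\<bar>^2 \<partial>\<nu>) \<le> B * (norm x)^2"
proof -
  have P: "\<nu> \<in> P2 V" and A: "0 < A" "A \<le> B"
    and up: "\<And>v. v \<in> V \<Longrightarrow> (\<integral>z. \<bar>v \<bullet> z\<bar>^2 \<partial>\<nu>) \<le> B * (norm v)^2"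
    using pf unfolding prob_frame_def by auto
  obtain v u where v: "v \<in> V" and u: "u \<in> orthogonal_comp V" and x: "x = v + u" by (rule decompV[OF sV])
  have "AE z in \<nu>. \<bar>x \<bullet> z\<bar>^2 = \<bar>v \<bullet> z\<bar>^2"
    using AE_orth[OF P2D(3)[OF P]] by eventually_elim (use u in \<open>auto simp: x inner_add_left\<close>)
  then have "(\<integral>z. \<bar>x \<bullet> z\<bar>^2 \<partial>\<nu>) = (\<integral>z. \<bar>v \<bullet> z\<bar>^2 \<partial>\<nu>)"
    by (intro integral_cong_AE meas_cont[OF P2D(2)[OF P]]) (auto intro!: continuous_intros)
  also have "\<dots> \<le> B * (norm v)^2" by (rule up[OF v])
  also have "\<dots> \<le> B * (norm x)^2"
  proof -
    have "orthogonal v u" using u v by (simp add: orthogonal_comp_def)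
    then have "(norm x)^2 = (norm v)^2 + (norm u)^2" unfolding x by (rule norm_add_Pythagorean)
    then show ?thesis using A by (intro mult_left_mono) auto
  qed
  finally show ?thesis .
qed

lemma frame_kernel:
  fixes \<nu> :: "(real^'n) measure"
  assumes pf: "prob_frame \<nu> V A B" and sV: "subspace V" and k: "frame_op \<nu> *v k = 0"
  shows "k \<in> orthogonal_comp V"
proof -
  have P: "\<nu> \<in> P2 V" and A: "0 < A"
    and lo: "\<And>v. v \<in> V \<Longrightarrow> A * (norm v)^2 \<le> (\<integral>z. \<bar>v \<bullet> z\<bar>^2 \<partial>\<nu>)"
    using pf unfolding prob_frame_def by auto
  have iS: "integrable \<nu> (\<lambda>y. (y \<bullet> k) *\<^sub>R y)"
    using integrable_bounded_linear[OF bl_mv_left int_outer_self[OF P], of k] by (simp add: outer_mult)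
  have "0 = k \<bullet> (frame_op \<nu> *v k)" using k by simp
  also have "\<dots> = (\<integral>y. k \<bullet> ((y \<bullet> k) *\<^sub>R y) \<partial>\<nu>)"
    unfolding frame_op_mv[OF P] by (rule integral_bounded_linear[OF bounded_linear_inner_right iS, symmetric])
  also have "\<dots> = (\<integral>y. \<bar>k \<bullet> y\<bar>^2 \<partial>\<nu>)"
    by (rule Bochner_Integration.integral_cong) (simp_all add: inner_commute power2_eq_square)
  finally have z: "(\<integral>y. \<bar>k \<bullet> y\<bar>^2 \<partial>\<nu>) = 0" by simp
  obtain v u where v: "v \<in> V" and u: "u \<in> orthogonal_comp V" and x: "k = v + u" by (rule decompV[OF sV])
  have "AE z in \<nu>. \<bar>k \<bullet> z\<bar>^2 = \<bar>v \<bullet> z\<bar>^2"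
    using AE_orth[OF P2D(3)[OF P]] by eventually_elim (use u in \<open>auto simp: x inner_add_left\<close>)
  then have "(\<integral>z. \<bar>k \<bullet> z\<bar>^2 \<partial>\<nu>) = (\<integral>z. \<bar>v \<bullet> z\<bar>^2 \<partial>\<nu>)"
    by (intro integral_cong_AE meas_cont[OF P2D(2)[OF P]]) (auto intro!: continuous_intros)
  then have "A * (norm v)^2 \<le> 0" using lo[OF v] z by simp
  then have "(norm v)^2 \<le> 0" using A by (simp add: mult_le_0_iff)
  then have "v = 0" by simp
  then show ?thesis using x u by simp
qed


theorem proposition6p3:
  fixes W V :: "(real^'n) set" and \<mu> \<nu> :: "(real^'n) measure"
    and A\<^sub>\<mu> B\<^sub>\<mu> A\<^sub>\<nu> B\<^sub>\<nu> :: real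
  assumes "subspace W" and "subspace V"
    and "W \<inter> orthogonal_comp V = {0}"
    and "\<forall>x. \<exists>w\<in>W. \<exists>u\<in>orthogonal_comp V. x = w + u"
    and "prob_frame \<mu> W A\<^sub>\<mu> B\<^sub>\<mu>"
    and "prob_frame \<nu> V A\<^sub>\<nu> B\<^sub>\<nu>"
  shows "(\<forall>\<epsilon> A B. oblique_approx_dual \<epsilon> \<nu> \<mu> W V \<and> prob_frame \<nu> V A B \<longrightarrow>
            consistent_reconstruction (sqrt B * \<epsilon>) \<mu> \<nu>)
       \<and> (\<forall>\<alpha>. consistent_reconstruction \<alpha> \<mu> \<nu> \<longrightarrow>
            oblique_approx_dual
              (\<alpha> * sqrt (M2 (distr \<nu> borel
                 (\<lambda>y. oblique_proj W (orthogonal_comp V) (mp_inverse (frame_op \<nu>) *v y)))))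
              \<nu> \<mu> W V)"
proof -
  note sW = assms(1) and sV = assms(2)
  define U where "U = orthogonal_comp V"
  have sU: "subspace U" unfolding U_def by (rule subspace_orthogonal_comp)
  have int: "W \<inter> U = {0}" and dec: "\<forall>x. \<exists>w\<in>W. \<exists>u\<in>U. x = w + u" using assms(3,4) unfolding U_def by auto
  define P where "P = oblique_proj W U"
  have Pin: "\<And>x. P x \<in> W" and Pdiff: "\<And>x. x - P x \<in> U"
    unfolding P_def using obl_props[OF sW sU int dec] by auto
  have linP: "linear P" unfolding P_def by (rule obl_linear[OF sW sU int dec])
  have blP: "bounded_linear P" using linP by (simp add: linear_conv_bounded_linear)
  have PW: "\<And>w. w \<in> W \<Longrightarrow> P w = w" unfolding P_def using obl_unique[OF sW sU int] sU
    by (simp add: subspace_0)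
  have PU: "\<And>u. u \<in> U \<Longrightarrow> P u = 0" unfolding P_def using obl_unique[OF sW sU int, of 0] sU sW
    by (simp add: subspace_0)
  have mP: "\<And>x. matrix P *v x = P x" using fun_cong[OF matrix_vector_mul(2)[OF linP]] by simp
  have Pmu: "\<mu> \<in> P2 W" using assms(5) unfolding prob_frame_def by auto
  have Pnu: "\<nu> \<in> P2 V" using assms(6) unfolding prob_frame_def by auto
  have snu: "sets \<nu> = sets borel" by (rule P2D(2)[OF Pnu])
  have AEU: "AE z in \<nu>. \<forall>u\<in>U. u \<bullet> z = 0" unfolding U_def by (rule AE_orth[OF P2D(3)[OF Pnu]])
  have part1: "consistent_reconstruction (sqrt B * \<epsilon>) \<mu> \<nu>"
    if oad: "oblique_approx_dual \<epsilon> \<nu> \<mu> W V" and pf: "prob_frame \<nu> V A B" for \<epsilon> A B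
  proof -
    obtain \<gamma> where eps: "0 \<le> \<epsilon>" and g: "\<gamma> \<in> couplings \<mu> \<nu>"
      and on: "onorm (\<lambda>v. (cross_op \<gamma> - matrix P) *v v) \<le> \<epsilon>"
      using oad unfolding oblique_approx_dual_def P_def U_def by blast
    have B: "0 \<le> B" using pf unfolding prob_frame_def by auto
    show ?thesis unfolding consistent_reconstruction_def
    proof (intro conjI bexI[OF _ g] allI)
      show "0 \<le> sqrt B * \<epsilon>" using B eps by simp
      fix f
      define d where "d = (cross_op \<gamma> - matrix P) *v f"
      have nd: "norm d \<le> \<epsilon> * norm f"
      proof -
        have "norm d \<le> onorm (\<lambda>v. (cross_op \<gamma> - matrix P) *v v) * norm f"
          unfolding d_def by (rule onorm[OF matrix_vector_mul_bounded_linear])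
        also have "\<dots> \<le> \<epsilon> * norm f" by (rule mult_right_mono[OF on norm_ge_zero])
        finally show ?thesis .
      qed
      have dR: "d = reconstr \<gamma> f - P f"
        unfolding d_def by (simp add: matrix_vector_mult_diff_rdistrib mP cross_op_mv[OF g Pmu Pnu])
      have "AE z in \<nu>. \<bar>(f - reconstr \<gamma> f) \<bullet> z\<bar>^2 = \<bar>d \<bullet> z\<bar>^2"
        using AEU
      proof eventually_elim
        case (elim z)
        have "(f - P f) \<bullet> z = 0" using elim Pdiff by blast
        moreover have e: "f - reconstr \<gamma> f = (f - P f) - d" unfolding dR by simp
        have "(f - reconstr \<gamma> f) \<bullet> z = (f - P f) \<bullet> z - d \<bullet> z" unfolding e by (rule inner_diff_left)
        ultimately show ?case by simp
      qed
      then have "(\<integral>z. \<bar>(f - reconstr \<gamma> f) \<bullet> z\<bar>^2 \<partial>\<nu>) = (\<integral>z. \<bar>d \<bullet> z\<bar>^2 \<partial>\<nu>)"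
        by (intro integral_cong_AE meas_cont[OF snu]) (auto intro!: continuous_intros)
      also have "\<dots> \<le> B * (norm d)^2" by (rule frame_upper_all[OF pf sV])
      also have "\<dots> \<le> B * (\<epsilon> * norm f)^2"
        using nd B by (intro mult_left_mono power_mono) auto
      finally have "sqrt (\<integral>z. \<bar>(f - reconstr \<gamma> f) \<bullet> z\<bar>^2 \<partial>\<nu>) \<le> sqrt (B * (\<epsilon> * norm f)^2)"
        by (rule real_sqrt_le_mono)
      also have "\<dots> = sqrt B * \<epsilon> * norm f" using eps by (simp add: real_sqrt_mult)
      finally show "sqrt (\<integral>z. \<bar>(f - reconstr \<gamma> f) \<bullet> z\<bar>^2 \<partial>\<nu>) \<le> sqrt B * \<epsilon> * norm f" .
    qed
  qed
  have part2: "oblique_approx_dual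
              (\<alpha> * sqrt (M2 (distr \<nu> borel (\<lambda>y. P (mp_inverse (frame_op \<nu>) *v y))))) \<nu> \<mu> W V"
    if cr: "consistent_reconstruction \<alpha> \<mu> \<nu>" for \<alpha>
  proof -
    obtain \<gamma> where al: "0 \<le> \<alpha>" and g: "\<gamma> \<in> couplings \<mu> \<nu>"
      and H: "\<And>f. sqrt (\<integral>z. \<bar>(f - reconstr \<gamma> f) \<bullet> z\<bar>^2 \<partial>\<nu>) \<le> \<alpha> * norm f"
      using cr unfolding consistent_reconstruction_def by blast
    define S where "S = frame_op \<nu>"
    define X where "X = mp_inverse S"
    define G where "G = (\<lambda>y. P (X *v y))"
    have linG: "linear G" unfolding G_def using linear_compose[OF matrix_vector_mul_linear linP] by (simp add: o_def)
    have blG: "bounded_linear G" using linG by (simp add: linear_conv_bounded_linear)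
    have cG: "continuous_on UNIV G" by (rule linear_continuous_on[OF blG])
    have Gm: "G \<in> measurable \<nu> borel" by (rule meas_cont[OF snu cG])
    define M where "M = M2 (distr \<nu> borel G)"
    have Mint: "M = (\<integral>y. (norm (G y))^2 \<partial>\<nu>)"
      unfolding M_def M2_def
      by (rule integral_distr[OF Gm]) (intro borel_measurable_continuous_onI continuous_intros)
    have M0: "0 \<le> M" unfolding Mint by (rule Bochner_Integration.integral_nonneg) simp
    have GG: "(\<lambda>y. P (mp_inverse (frame_op \<nu>) *v y)) = G" unfolding G_def X_def S_def by simp
    have cP: "continuous_on UNIV P" by (rule linear_continuous_on[OF blP])
    obtain K where K: "K > 0" "\<And>x. norm (G x) \<le> norm x * K" using bounded_linear.pos_bounded[OF blG] by blast
    have sg: "sets \<gamma> = sets borel" by (rule couplingD(2)[OF g])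
    have i2: "integrable \<nu> (\<lambda>y. (norm y)^2)" by (rule P2D(4)[OF Pnu])
    show ?thesis
      unfolding oblique_approx_dual_def GG M_def[symmetric] U_def[symmetric] P_def[symmetric]
    proof (intro conjI bexI[OF _ g] onorm_le allI)
      show "0 \<le> \<alpha> * sqrt M" using al M0 by simp
      fix f
      define h where "h = (cross_op \<gamma> - matrix P) *v f"
      have hR: "h = reconstr \<gamma> f - P f"
        unfolding h_def by (simp add: matrix_vector_mult_diff_rdistrib mP cross_op_mv[OF g Pmu Pnu])
      have iF: "integrable \<gamma> (\<lambda>p. (snd p \<bullet> f) *\<^sub>R fst p)"
        using integrable_bounded_linear[OF bl_mv_left int_outer_pair[OF g Pmu Pnu], of f] by (simp add: outer_mult)
      have "P (reconstr \<gamma> f) = (\<integral>p. P ((snd p \<bullet> f) *\<^sub>R fst p) \<partial>\<gamma>)"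
        unfolding reconstr_def by (rule integral_bounded_linear[OF blP iF, symmetric])
      also have "\<dots> = (\<integral>p. (snd p \<bullet> f) *\<^sub>R fst p \<partial>\<gamma>)"
      proof (rule integral_cong_AE)
        show "(\<lambda>p. P ((snd p \<bullet> f) *\<^sub>R fst p)) \<in> borel_measurable \<gamma>"
          by (rule meas_cont[OF sg], rule continuous_on_compose2[OF cP]) (auto intro!: continuous_intros)
        show "(\<lambda>p. (snd p \<bullet> f) *\<^sub>R fst p) \<in> borel_measurable \<gamma>"
          by (rule meas_cont[OF sg]) (auto intro!: continuous_intros)
        show "AE p in \<gamma>. P ((snd p \<bullet> f) *\<^sub>R fst p) = (snd p \<bullet> f) *\<^sub>R fst p"
          using coupling_AE_fst[OF g Pmu closed_subspace[OF sW]]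
          by eventually_elim (simp add: linear_scale[OF linP] PW)
      qed
      finally have PR: "P (reconstr \<gamma> f) = reconstr \<gamma> f" unfolding reconstr_def .
      have Ph: "P h = h" unfolding hR by (simp add: linear_diff[OF linP] PR PW[OF Pin])
      obtain v u where v: "v \<in> V" and u: "u \<in> orthogonal_comp V" and hvu: "h = v + u" by (rule decompV[OF sV])
      have uU: "u \<in> U" using u unfolding U_def .
      have hv: "h = P v" using Ph unfolding hvu by (simp add: linear_add[OF linP] PU[OF uU])
      have Su: "S *v u = 0"
      proof -
        have "S *v u = (\<integral>y. (y \<bullet> u) *\<^sub>R y \<partial>\<nu>)" unfolding S_def by (rule frame_op_mv[OF Pnu])
        also have "\<dots> = (\<integral>y. 0 \<partial>\<nu>)"
        proof (rule integral_cong_AE)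
          show "(\<lambda>y. (y \<bullet> u) *\<^sub>R y) \<in> borel_measurable \<nu>"
            by (rule meas_cont[OF snu]) (auto intro!: continuous_intros)
          show "AE y in \<nu>. (y \<bullet> u) *\<^sub>R y = 0"
            using AEU by eventually_elim (use uU in \<open>auto simp: inner_commute\<close>)
        qed simp
        finally show ?thesis by simp
      qed
      have Shv: "S *v h = S *v v" unfolding hvu by (simp add: matrix_vector_right_distrib Su)
      have XSv: "X *v (S *v v) = v" unfolding X_def
      proof (rule mp_left)
        show "transpose S = S" unfolding S_def by (rule frame_op_sym[OF Pnu])
        fix k assume "S *v k = 0"
        then have "k \<in> orthogonal_comp V" unfolding S_def by (rule frame_kernel[OF assms(6) sV])
        then show "k \<bullet> v = 0" using v by (auto simp: orthogonal_comp_def orthogonal_def inner_commute)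
      qed
      have hG: "h = G (S *v h)" unfolding G_def Shv XSv by (rule hv)
      have iS: "integrable \<nu> (\<lambda>y. (y \<bullet> h) *\<^sub>R y)"
        using integrable_bounded_linear[OF bl_mv_left int_outer_self[OF Pnu], of h] by (simp add: outer_mult)
      have "h = G (\<integral>y. (y \<bullet> h) *\<^sub>R y \<partial>\<nu>)" using hG unfolding S_def frame_op_mv[OF Pnu] .
      also have "\<dots> = (\<integral>y. G ((y \<bullet> h) *\<^sub>R y) \<partial>\<nu>)" by (rule integral_bounded_linear[OF blG iS, symmetric])
      also have "\<dots> = (\<integral>y. (y \<bullet> h) *\<^sub>R G y \<partial>\<nu>)" by (simp add: linear_scale[OF linG])
      finally have hint: "h = (\<integral>y. (y \<bullet> h) *\<^sub>R G y \<partial>\<nu>)" .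
      have "norm h \<le> (\<integral>y. norm ((y \<bullet> h) *\<^sub>R G y) \<partial>\<nu>)"
        by (subst hint) (rule integral_norm_bound)
      also have "\<dots> = (\<integral>y. \<bar>y \<bullet> h\<bar> * norm (G y) \<partial>\<nu>)" by simp
      also have "\<dots> \<le> sqrt (\<integral>y. \<bar>y \<bullet> h\<bar>^2 \<partial>\<nu>) * sqrt (\<integral>y. (norm (G y))^2 \<partial>\<nu>)"
      proof (rule int_cs)
        show "integrable \<nu> (\<lambda>y. \<bar>y \<bullet> h\<bar>^2)"
        proof (rule int_by_sq[OF snu i2])
          show "continuous_on UNIV (\<lambda>y. \<bar>y \<bullet> h\<bar>^2)" by (intro continuous_intros)
          fix y :: "real^'n"
          have "\<bar>y \<bullet> h\<bar> \<le> norm y * norm h" by (rule Cauchy_Schwarz_ineq2)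
          then have "\<bar>y \<bullet> h\<bar>^2 \<le> (norm y * norm h)^2" by (intro power_mono) auto
          then show "\<bar>\<bar>y \<bullet> h\<bar>^2\<bar> \<le> (norm h)^2 * (norm y)^2" by (simp add: power_mult_distrib mult.commute)
        qed
        show "integrable \<nu> (\<lambda>y. (norm (G y))^2)"
        proof (rule int_by_sq[OF snu i2])
          show "continuous_on UNIV (\<lambda>y. (norm (G y))^2)" by (intro continuous_intros cG)
          fix y :: "real^'n"
          have "norm (G y) \<le> norm y * K" by (rule K(2))
          then have "(norm (G y))^2 \<le> (norm y * K)^2" by (intro power_mono) auto
          then show "\<bar>(norm (G y))^2\<bar> \<le> K^2 * (norm y)^2" by (simp add: power_mult_distrib mult.commute)
        qed
        show "integrable \<nu> (\<lambda>y. \<bar>y \<bullet> h\<bar> * norm (G y))"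
        proof (rule int_by_sq[OF snu i2])
          show "continuous_on UNIV (\<lambda>y. \<bar>y \<bullet> h\<bar> * norm (G y))" by (intro continuous_intros cG)
          fix y :: "real^'n"
          have a: "\<bar>y \<bullet> h\<bar> \<le> norm y * norm h" by (rule Cauchy_Schwarz_ineq2)
          have b: "norm (G y) \<le> norm y * K" by (rule K(2))
          have "\<bar>y \<bullet> h\<bar> * norm (G y) \<le> (norm y * norm h) * (norm y * K)"
            by (rule mult_mono[OF a b]) auto
          then show "\<bar>\<bar>y \<bullet> h\<bar> * norm (G y)\<bar> \<le> (norm h * K) * (norm y)^2"
            by (simp add: power2_eq_square mult_ac)
        qed
      qed
      also have "\<dots> \<le> (\<alpha> * norm f) * sqrt M"
      proof (rule mult_mono)
        have "AE y in \<nu>. \<bar>y \<bullet> h\<bar>^2 = \<bar>(f - reconstr \<gamma> f) \<bullet> y\<bar>^2"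
          using AEU
        proof eventually_elim
          case (elim y)
          have "(f - P f) \<bullet> y = 0" using elim Pdiff by blast
          moreover have e: "f - reconstr \<gamma> f = (f - P f) - h" unfolding hR by simp
          have "(f - reconstr \<gamma> f) \<bullet> y = (f - P f) \<bullet> y - h \<bullet> y" unfolding e by (rule inner_diff_left)
          ultimately show ?case by (simp add: inner_commute)
        qed
        then have "(\<integral>y. \<bar>y \<bullet> h\<bar>^2 \<partial>\<nu>) = (\<integral>y. \<bar>(f - reconstr \<gamma> f) \<bullet> y\<bar>^2 \<partial>\<nu>)"
          by (intro integral_cong_AE meas_cont[OF snu]) (auto intro!: continuous_intros)
        then show "sqrt (\<integral>y. \<bar>y \<bullet> h\<bar>^2 \<partial>\<nu>) \<le> \<alpha> * norm f" using H[of f] by simp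
        show "sqrt (\<integral>y. (norm (G y))^2 \<partial>\<nu>) \<le> sqrt M" unfolding Mint by simp
        show "0 \<le> \<alpha> * norm f" using al by simp
      qed simp
      finally show "norm ((cross_op \<gamma> - matrix P) *v f) \<le> \<alpha> * sqrt M * norm f"
        unfolding h_def by (simp add: mult_ac)
    qed
  qed
  show ?thesis
    using part1 part2 unfolding P_def U_def by blast
qed


end
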